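(* Let $\varphi$ be a GFG-QPTL formula, $\mathcal X\in\mathrm{HAsg}_\supseteq(\mathrm{free}(\varphi))$ and $\alpha$ an alternation flag. Then $\overline{\mathcal X}\models^{\bar\alpha}\varphi$ iff $\overline{\overline{\mathcal X}}\models^\alpha\varphi$ iff $\mathcal X\models^\alpha\varphi$.
   Context: Let $AP$ be a set of atomic propositions and $\mathbb B=\{\top,\bot\}$. A temporal valuation is a function $f:\mathbb N\to\mathbb B$. An assignment is a partial function $\chi:AP\rightharpoonup(\mathbb N\to\mathbb B)$; $\mathrm{Asg}$ is the set of all assignments, $\mathrm{Asg}(P)$ the set of assignments with domain exactly $P\subseteq AP$. For an assignment $\chi$, $p\in AP$ and a temporal valuation $f$, $\chi[p\mapsto f]$ is the assignment that agrees with $\chi$ except that it maps $p$ to $f$. A hyperassignment is a set $\mathcal X$ with $\emptyset\neq\mathcal X\subseteq 2^{\mathrm{Asg}(P)}$ and $\emptyset\notin\mathcal X$, for some $P\subseteq AP$; this $P$ is denoted $\mathrm{ap}(\mathcal X)$. $\mathrm{HAsg}$ is the set of all hyperassignments, $\mathrm{HAsg}(P)$ those with $\mathrm{ap}(\mathcal X)=P$, and $\mathrm{HAsg}_\supseteq(P)$ those with $\mathrm{ap}(\mathcal X)\supseteq P$. A choice function for $\mathcal X$ is a map $c:\mathcal X\to\mathrm{Asg}$ with $c(X)\in X$ for all $X\in\mathcal X$. The dual of $\mathcal X$ is $\overline{\mathcal X}=\{\mathrm{img}(c): c\text{ a choice function for }\mathcal X\}$. $\mathrm{par}(\mathcal X)$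 is the set of pairs $(\mathcal X_1,\mathcal X_2)$ of (possibly empty) subsets of $\mathcal X$ with $\mathcal X_1\cap\mathcal X_2=\emptyset$ and $\mathcal X_1\cup\mathcal X_2=\mathcal X$. A functor over $P\subseteq AP$ is a function $F:\mathrm{Asg}(P)\to(\mathbb N\to\mathbb B)$; $\mathrm{Fnc}(P)$ is the set of all of them. $\mathrm{ext}(\chi,F,p)=\chi[p\mapsto F(\chi)]$ and $\mathrm{ext}(X,F,p)=\{\mathrm{ext}(\chi,F,p):\chi\in X\}$. For $\chi_1,\chi_2\in\mathrm{Asg}(P)$, $p\in P$, $k\in\mathbb N$: $\chi_1\approx^{>k}_p\chi_2$ iff $\chi_1(q)=\chi_2(q)$ for all $q\in P\setminus\{p\}$ and $\chi_1(p)(t)=\chi_2(p)(t)$ for all $t\le k$; $\chi_1\approx^{\ge k}_p\chi_2$ is defined the same way with $t<k$ in place of $t\le k$. $F\in\mathrm{Fnc}(P)$ is behavioral (resp. strongly behavioral) w.r.t. $p\in P$ if $F(\chi_1)(k)=F(\chi_2)(k)$ for all $k\in\mathbb N$ and all $\chi_1,\chi_2$ with $\chi_1\approx^{>k}_p\chi_2$ (resp. $\chi_1\approx^{\ge k}_p\chi_2$). A quantifier specification is a pair $\sigma=\langle P_B,P_S\rangle$ of subsets of $AP$; $\mathrm{Fnc}_\sigma(P)$ is the set of $F\in\mathrm{Fnc}(P)$ that are behavioral w.r.t. every $p\in P_B\cap P$ and strongly behavioral w.r.t. every $p\in P_S\cap P$. $\mathrm{ext}_\sigma(\mathcal X,p)=\{\mathrm{ext}(X,F,p):X\in\mathcal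 X,\ F\in\mathrm{Fnc}_\sigma(\mathrm{ap}(\mathcal X))\}$. GFG-QPTL formulas are generated by $\varphi::=\psi\mid\neg\varphi\mid\varphi\wedge\varphi\mid\varphi\vee\varphi\mid\exists p{:}\sigma.\varphi\mid\forall p{:}\sigma.\varphi$, where $\psi$ is an LTL formula over $AP$, $p\in AP$ and $\sigma$ a quantifier specification; we also write $\exists^\sigma p.\varphi$, $\forall^\sigma p.\varphi$. QPTL formulas are those in which every specification is $\langle\emptyset,\emptyset\rangle$. $\mathrm{free}(\varphi)$ is the set of free propositions. $\chi\models_{LTL}\psi$ iff the infinite word whose $t$-th letter is the valuation $q\mapsto\chi(q)(t)$ satisfies $\psi$ in the standard LTL sense. Alternation flags are $\exists\forall$ and $\forall\exists$; $\bar\alpha$ is the flag different from $\alpha$. For a GFG-QPTL formula $\varphi$, $\mathcal X\in\mathrm{HAsg}_\supseteq(\mathrm{free}(\varphi))$ and flag $\alpha$, $\mathcal X\models^\alpha\varphi$ is defined inductively: (1) for LTL $\psi$: $\mathcal X\models^{\exists\forall}\psi$ iff there is $X\in\mathcal X$ with $\chi\models_{LTL}\psi$ for all $\chi\in X$; $\mathcal X\models^{\forall\exists}\psi$ iff for every $X\in\mathcal X$ there is $\chi\in X$ with $\chi\models_{LTL}\psi$; (2) $\mathcal X\models^\alpha\neg\phi$ iff not $\mathcal X\models^{\bar\alpha}\phi$; (3) $\mathcal X\models^{\exists\forall}\phi_1\wedge\phi_2$ iff for every $(\mathcal X_1,\mathcal X_2)\in\mathrm{par}(\mathcal X)$, either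 ($\mathcal X_1\ne\emptyset$ and $\mathcal X_1\models^{\exists\forall}\phi_1$) or ($\mathcal X_2\ne\emptyset$ and $\mathcal X_2\models^{\exists\forall}\phi_2$); $\mathcal X\models^{\forall\exists}\phi_1\wedge\phi_2$ iff $\overline{\mathcal X}\models^{\exists\forall}\phi_1\wedge\phi_2$; (4) $\mathcal X\models^{\forall\exists}\phi_1\vee\phi_2$ iff there is $(\mathcal X_1,\mathcal X_2)\in\mathrm{par}(\mathcal X)$ such that ($\mathcal X_1\neq\emptyset$ implies $\mathcal X_1\models^{\forall\exists}\phi_1$) and ($\mathcal X_2\neq\emptyset$ implies $\mathcal X_2\models^{\forall\exists}\phi_2$); $\mathcal X\models^{\exists\forall}\phi_1\vee\phi_2$ iff $\overline{\mathcal X}\models^{\forall\exists}\phi_1\vee\phi_2$; (5) $\mathcal X\models^{\exists\forall}\exists p{:}\sigma.\phi$ iff $\mathrm{ext}_\sigma(\mathcal X,p)\models^{\exists\forall}\phi$; $\mathcal X\models^{\forall\exists}\exists p{:}\sigma.\phi$ iff $\overline{\mathcal X}\models^{\exists\forall}\exists p{:}\sigma.\phi$; (6) $\mathcal X\models^{\forall\exists}\forall p{:}\sigma.\phi$ iff $\mathrm{ext}_\sigma(\mathcal X,p)\models^{\forall\exists}\phi$; $\mathcal X\models^{\exists\forall}\forall p{:}\sigma.\phi$ iff $\overline{\mathcal X}\models^{\forall\exists}\forall p{:}\sigma.\phi$. *)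

theory Defs
  imports Main
begin

text \<open>Atomic propositions are the elements of the type 'a (AP = UNIV).
  A temporal valuation is nat => bool; an assignment is a partial map.\<close>

type_synonym 'a asg = "'a \<rightharpoonup> (nat \<Rightarrow> bool)"

definition Asg :: "'a set \<Rightarrow> 'a asg set" where
  "Asg P = {\<chi>. dom \<chi> = P}"

definition is_hasg :: "'a asg set set \<Rightarrow> 'a set \<Rightarrow> bool" where
  "is_hasg \<X> P \<longleftrightarrow> \<X> \<noteq> {} \<and> \<X> \<subseteq> Pow (Asg P) \<and> {} \<notin> \<X>"

definition ap :: "'a asg set set \<Rightarrow> 'a set" where
  "ap \<X> = (THE P. is_hasg \<X> P)"

definition HAsg_sup :: "'a set \<Rightarrow> 'a asg set set set" where
  "HAsg_sup P = {\<X>. \<exists>Q. P \<subseteq> Q \<and> is_hasg \<X> Q}"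

definition dual :: "'a asg set set \<Rightarrow> 'a asg set set" where
  "dual \<X> = {c ` \<X> | c. \<forall>X\<in>\<X>. c X \<in> X}"

definition par :: "'b set \<Rightarrow> ('b set \<times> 'b set) set" where
  "par \<X> = {(X1, X2). X1 \<subseteq> \<X> \<and> X2 \<subseteq> \<X> \<and> X1 \<inter> X2 = {} \<and> X1 \<union> X2 = \<X>}"

text \<open>A functor over P is modelled as a total function on assignments; only its values on
  Asg P matter.\<close>

type_synonym 'a fnc = "'a asg \<Rightarrow> (nat \<Rightarrow> bool)"

definition ext_asg :: "'a asg \<Rightarrow> 'a fnc \<Rightarrow> 'a \<Rightarrow> 'a asg" where
  "ext_asg \<chi> F p = \<chi>(p \<mapsto> F \<chi>)"

definition ext_set :: "'a asg set \<Rightarrow> 'a fnc \<Rightarrow> 'a \<Rightarrow> 'a asg set" where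
  "ext_set X F p = (\<lambda>\<chi>. ext_asg \<chi> F p) ` X"

definition agree_gt :: "'a set \<Rightarrow> 'a \<Rightarrow> nat \<Rightarrow> 'a asg \<Rightarrow> 'a asg \<Rightarrow> bool" where
  "agree_gt P p k \<chi>1 \<chi>2 \<longleftrightarrow>
     (\<forall>q\<in>P - {p}. \<chi>1 q = \<chi>2 q) \<and> (\<forall>t\<le>k. the (\<chi>1 p) t = the (\<chi>2 p) t)"

definition agree_ge :: "'a set \<Rightarrow> 'a \<Rightarrow> nat \<Rightarrow> 'a asg \<Rightarrow> 'a asg \<Rightarrow> bool" where
  "agree_ge P p k \<chi>1 \<chi>2 \<longleftrightarrow>
     (\<forall>q\<in>P - {p}. \<chi>1 q = \<chi>2 q) \<and> (\<forall>t<k. the (\<chi>1 p) t = the (\<chi>2 p) t)"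

definition behavioral :: "'a set \<Rightarrow> 'a fnc \<Rightarrow> 'a \<Rightarrow> bool" where
  "behavioral P F p \<longleftrightarrow> (\<forall>k. \<forall>\<chi>1\<in>Asg P. \<forall>\<chi>2\<in>Asg P.
      agree_gt P p k \<chi>1 \<chi>2 \<longrightarrow> F \<chi>1 k = F \<chi>2 k)"

definition strongly_behavioral :: "'a set \<Rightarrow> 'a fnc \<Rightarrow> 'a \<Rightarrow> bool" where
  "strongly_behavioral P F p \<longleftrightarrow> (\<forall>k. \<forall>\<chi>1\<in>Asg P. \<forall>\<chi>2\<in>Asg P.
      agree_ge P p k \<chi>1 \<chi>2 \<longrightarrow> F \<chi>1 k = F \<chi>2 k)"

type_synonym 'a qspec = "'a set \<times> 'a set"

definition Fnc_sigma :: "'a qspec \<Rightarrow> 'a set \<Rightarrow> 'a fnc set" where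
  "Fnc_sigma \<sigma> P = {F. (\<forall>p\<in>fst \<sigma> \<inter> P. behavioral P F p)
                      \<and> (\<forall>p\<in>snd \<sigma> \<inter> P. strongly_behavioral P F p)}"

definition ext_sigma :: "'a qspec \<Rightarrow> 'a asg set set \<Rightarrow> 'a \<Rightarrow> 'a asg set set" where
  "ext_sigma \<sigma> \<X> p = {ext_set X F p | X F. X \<in> \<X> \<and> F \<in> Fnc_sigma \<sigma> (ap \<X>)}"

datatype 'a ltl =
    LTrue
  | LProp 'a
  | LNot "'a ltl"
  | LAnd "'a ltl" "'a ltl"
  | LOr "'a ltl" "'a ltl"
  | LNext "'a ltl"
  | LUntil "'a ltl" "'a ltl"

primrec ltl_holds :: "(nat \<Rightarrow> 'a \<Rightarrow> bool) \<Rightarrow> nat \<Rightarrow> 'a ltl \<Rightarrow> bool" where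
  "ltl_holds w i LTrue = True"
| "ltl_holds w i (LProp p) = w i p"
| "ltl_holds w i (LNot \<psi>) = (\<not> ltl_holds w i \<psi>)"
| "ltl_holds w i (LAnd \<psi>1 \<psi>2) = (ltl_holds w i \<psi>1 \<and> ltl_holds w i \<psi>2)"
| "ltl_holds w i (LOr \<psi>1 \<psi>2) = (ltl_holds w i \<psi>1 \<or> ltl_holds w i \<psi>2)"
| "ltl_holds w i (LNext \<psi>) = ltl_holds w (Suc i) \<psi>"
| "ltl_holds w i (LUntil \<psi>1 \<psi>2) =
     (\<exists>j\<ge>i. ltl_holds w j \<psi>2 \<and> (\<forall>k. i \<le> k \<and> k < j \<longrightarrow> ltl_holds w k \<psi>1))"

primrec ltl_atoms :: "'a ltl \<Rightarrow> 'a set" where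
  "ltl_atoms LTrue = {}"
| "ltl_atoms (LProp p) = {p}"
| "ltl_atoms (LNot \<psi>) = ltl_atoms \<psi>"
| "ltl_atoms (LAnd \<psi>1 \<psi>2) = ltl_atoms \<psi>1 \<union> ltl_atoms \<psi>2"
| "ltl_atoms (LOr \<psi>1 \<psi>2) = ltl_atoms \<psi>1 \<union> ltl_atoms \<psi>2"
| "ltl_atoms (LNext \<psi>) = ltl_atoms \<psi>"
| "ltl_atoms (LUntil \<psi>1 \<psi>2) = ltl_atoms \<psi>1 \<union> ltl_atoms \<psi>2"

definition word_of :: "'a asg \<Rightarrow> nat \<Rightarrow> 'a \<Rightarrow> bool" where
  "word_of \<chi> t q = (case \<chi> q of Some f \<Rightarrow> f t | None \<Rightarrow> False)"

definition models_LTL :: "'a asg \<Rightarrow> 'a ltl \<Rightarrow> bool" where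
  "models_LTL \<chi> \<psi> \<longleftrightarrow> ltl_holds (word_of \<chi>) 0 \<psi>"

datatype 'a gfg =
    GLTL "'a ltl"
  | GNeg "'a gfg"
  | GConj "'a gfg" "'a gfg"
  | GDisj "'a gfg" "'a gfg"
  | GEx 'a "'a qspec" "'a gfg"
  | GAll 'a "'a qspec" "'a gfg"

primrec free :: "'a gfg \<Rightarrow> 'a set" where
  "free (GLTL \<psi>) = ltl_atoms \<psi>"
| "free (GNeg \<phi>) = free \<phi>"
| "free (GConj \<phi>1 \<phi>2) = free \<phi>1 \<union> free \<phi>2"
| "free (GDisj \<phi>1 \<phi>2) = free \<phi>1 \<union> free \<phi>2"
| "free (GEx p \<sigma> \<phi>) = free \<phi> - {p}"
| "free (GAll p \<sigma> \<phi>) = free \<phi> - {p}"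

datatype flag = EA | AE

fun flip :: "flag \<Rightarrow> flag" where
  "flip EA = AE"
| "flip AE = EA"

text \<open>Semantics X |=^alpha phi.  The clauses that refer to the dual (same formula,
  other flag) are unfolded literally so that the recursion is structural.\<close>

primrec sat :: "'a gfg \<Rightarrow> flag \<Rightarrow> 'a asg set set \<Rightarrow> bool" where
  "sat (GLTL \<psi>) \<alpha> \<X> =
     (case \<alpha> of
        EA \<Rightarrow> (\<exists>X\<in>\<X>. \<forall>\<chi>\<in>X. models_LTL \<chi> \<psi>)
      | AE \<Rightarrow> (\<forall>X\<in>\<X>. \<exists>\<chi>\<in>X. models_LTL \<chi> \<psi>))"
| "sat (GNeg \<phi>) \<alpha> \<X> = (\<not> sat \<phi> (flip \<alpha>) \<X>)"
| "sat (GConj \<phi>1 \<phi>2) \<alpha> \<X> =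
     (let ea = (\<lambda>\<Y>. \<forall>(\<Y>1, \<Y>2)\<in>par \<Y>.
                  (\<Y>1 \<noteq> {} \<and> sat \<phi>1 EA \<Y>1) \<or> (\<Y>2 \<noteq> {} \<and> sat \<phi>2 EA \<Y>2))
      in case \<alpha> of EA \<Rightarrow> ea \<X> | AE \<Rightarrow> ea (dual \<X>))"
| "sat (GDisj \<phi>1 \<phi>2) \<alpha> \<X> =
     (let ae = (\<lambda>\<Y>. \<exists>(\<Y>1, \<Y>2)\<in>par \<Y>.
                  (\<Y>1 \<noteq> {} \<longrightarrow> sat \<phi>1 AE \<Y>1) \<and> (\<Y>2 \<noteq> {} \<longrightarrow> sat \<phi>2 AE \<Y>2))
      in case \<alpha> of AE \<Rightarrow> ae \<X> | EA \<Rightarrow> ae (dual \<X>))"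
| "sat (GEx p \<sigma> \<phi>) \<alpha> \<X> =
     (let ea = (\<lambda>\<Y>. sat \<phi> EA (ext_sigma \<sigma> \<Y> p))
      in case \<alpha> of EA \<Rightarrow> ea \<X> | AE \<Rightarrow> ea (dual \<X>))"
| "sat (GAll p \<sigma> \<phi>) \<alpha> \<X> =
     (let ae = (\<lambda>\<Y>. sat \<phi> AE (ext_sigma \<sigma> \<Y> p))
      in case \<alpha> of AE \<Rightarrow> ae \<X> | EA \<Rightarrow> ae (dual \<X>))"

end

theory Submission
  imports Defs
begin

definition refines :: "'b set set \<Rightarrow> 'b set set \<Rightarrow> bool" where
  "refines X Y \<longleftrightarrow> (\<forall>Z\<in>X. \<exists>W\<in>Y. W \<subseteq> Z)"

lemma dual_I: "(\<And>Z. Z \<in> X \<Longrightarrow> c Z \<in> Z) \<Longrightarrow> c ` X \<in> dual X"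
  unfolding dual_def by blast

lemma dual_E: "T \<in> dual X \<Longrightarrow> (\<And>c. T = c ` X \<Longrightarrow> (\<forall>Z\<in>X. c Z \<in> Z) \<Longrightarrow> R) \<Longrightarrow> R"
  unfolding dual_def by blast

lemma some_ch: "\<forall>x\<in>A. \<exists>y. P x y \<Longrightarrow> \<forall>x\<in>A. P x (SOME y. P x y)"
  by (meson someI_ex)

lemma hasg_ap: "is_hasg X P \<Longrightarrow> ap X = P"
  unfolding ap_def
proof (rule the_equality)
  fix Q assume h: "is_hasg X P" "is_hasg X Q"
  then obtain Z where "Z \<in> X" "Z \<noteq> {}" unfolding is_hasg_def by blast
  then obtain \<chi> where "\<chi> \<in> Z" by blast
  with h \<open>Z \<in> X\<close> show "Q = P" unfolding is_hasg_def Asg_def by blast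
qed

lemma hasg_subset: "is_hasg X P \<Longrightarrow> Y \<subseteq> X \<Longrightarrow> Y \<noteq> {} \<Longrightarrow> is_hasg Y P"
  unfolding is_hasg_def by blast

lemma dual_hasg: assumes "is_hasg X P" shows "is_hasg (dual X) P"
proof -
  define c where "c = (\<lambda>Z::'a asg set. SOME \<chi>. \<chi> \<in> Z)"
  have c: "\<forall>Z\<in>X. c Z \<in> Z" using assms unfolding is_hasg_def c_def
    by (metis ex_in_conv someI_ex)
  have "c ` X \<in> dual X" by (rule dual_I) (use c in blast)
  moreover have "\<forall>T\<in>dual X. T \<subseteq> Asg P \<and> T \<noteq> {}"
  proof
    fix T assume "T \<in> dual X"
    then obtain d where "T = d ` X" "\<forall>Z\<in>X. d Z \<in> Z" by (rule dual_E) blast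
    then show "T \<subseteq> Asg P \<and> T \<noteq> {}" using assms unfolding is_hasg_def by blast
  qed
  ultimately show ?thesis unfolding is_hasg_def by blast
qed

lemma dual_antitone: assumes "refines X Y" shows "refines (dual Y) (dual X)"
  unfolding refines_def
proof
  fix T assume "T \<in> dual Y"
  then obtain c where T: "T = c ` Y" and c: "\<forall>W\<in>Y. c W \<in> W" by (rule dual_E) blast
  define g where "g Z = (SOME W. W \<in> Y \<and> W \<subseteq> Z)" for Z
  have g: "g Z \<in> Y \<and> g Z \<subseteq> Z" if "Z \<in> X" for Z
    using some_ch[of X "\<lambda>Z W. W \<in> Y \<and> W \<subseteq> Z"] assms that unfolding refines_def g_def by blast
  have "(\<lambda>Z. c (g Z)) ` X \<in> dual X" by (rule dual_I) (use g c in blast)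
  moreover have "(\<lambda>Z. c (g Z)) ` X \<subseteq> T" using T g by blast
  ultimately show "\<exists>W\<in>dual X. W \<subseteq> T" by blast
qed

lemma refines_dd1: "refines X (dual (dual X))"
  unfolding refines_def
proof
  fix Z assume Z: "Z \<in> X"
  define e where "e T = (SOME \<chi>. \<chi> \<in> T \<and> \<chi> \<in> Z)" for T
  have e: "e T \<in> T \<and> e T \<in> Z" if "T \<in> dual X" for T
  proof -
    from that obtain c where "T = c ` X" "\<forall>W\<in>X. c W \<in> W" by (rule dual_E) blast
    then have "\<exists>\<chi>. \<chi> \<in> T \<and> \<chi> \<in> Z" using Z by blast
    then show ?thesis unfolding e_def by (rule someI_ex)
  qed
  have "e ` dual X \<in> dual (dual X)" by (rule dual_I) (use e in blast)
  moreover have "e ` dual X \<subseteq> Z" using e by blast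
  ultimately show "\<exists>W\<in>dual (dual X). W \<subseteq> Z" by blast
qed

lemma refines_dd2: "refines (dual (dual X)) X"
  unfolding refines_def
proof
  fix Y assume "Y \<in> dual (dual X)"
  then obtain e where Y: "Y = e ` dual X" and e: "\<forall>T\<in>dual X. e T \<in> T" by (rule dual_E) blast
  show "\<exists>W\<in>X. W \<subseteq> Y"
  proof (rule ccontr)
    assume "\<not> ?thesis"
    then have "\<forall>W\<in>X. \<exists>\<chi>. \<chi> \<in> W \<and> \<chi> \<notin> Y" by blast
    define c where "c W = (SOME \<chi>. \<chi> \<in> W \<and> \<chi> \<notin> Y)" for W
    have c: "\<forall>W\<in>X. c W \<in> W \<and> c W \<notin> Y"
      using some_ch[OF \<open>\<forall>W\<in>X. \<exists>\<chi>. \<chi> \<in> W \<and> \<chi> \<notin> Y\<close>] unfolding c_def .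
    have "c ` X \<in> dual X" by (rule dual_I) (use c in blast)
    then have "e (c ` X) \<in> c ` X" using e by blast
    moreover have "e (c ` X) \<in> Y" unfolding Y using \<open>c ` X \<in> dual X\<close> by (rule imageI)
    ultimately obtain W where W: "W \<in> X" "e (c ` X) = c W" "e (c ` X) \<in> Y" by blast
    then have "c W \<in> Y" by simp
    then show False using c W(1) by blast
  qed
qed

lemma const_fnc: "(\<lambda>_. \<lambda>_. False) \<in> Fnc_sigma \<sigma> P"
  unfolding Fnc_sigma_def behavioral_def strongly_behavioral_def by simp

lemma ext_hasg: assumes "is_hasg X P" shows "is_hasg (ext_sigma \<sigma> X p) (insert p P)"
proof -
  obtain Z where "Z \<in> X" using assms unfolding is_hasg_def by blast
  then have "ext_set Z (\<lambda>_. \<lambda>_. False) p \<in> ext_sigma \<sigma> X p"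
    unfolding ext_sigma_def using const_fnc by blast
  moreover have "\<forall>T\<in>ext_sigma \<sigma> X p. T \<subseteq> Asg (insert p P) \<and> T \<noteq> {}"
  proof
    fix T assume "T \<in> ext_sigma \<sigma> X p"
    then obtain Y F where T: "T = ext_set Y F p" "Y \<in> X" unfolding ext_sigma_def by blast
    then have "Y \<subseteq> Asg P" "Y \<noteq> {}" using assms unfolding is_hasg_def by blast+
    then show "T \<subseteq> Asg (insert p P) \<and> T \<noteq> {}"
      unfolding T ext_set_def ext_asg_def Asg_def by auto
  qed
  ultimately show ?thesis unfolding is_hasg_def by blast
qed

lemma ext_mono: assumes "is_hasg X P" "is_hasg Y P" "refines X Y"
  shows "refines (ext_sigma \<sigma> X p) (ext_sigma \<sigma> Y p)"
proof -
  have ap: "ap X = ap Y" using assms hasg_ap by metis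
  show ?thesis unfolding refines_def
  proof
    fix T assume "T \<in> ext_sigma \<sigma> X p"
    then obtain Z F where T: "T = ext_set Z F p" "Z \<in> X" "F \<in> Fnc_sigma \<sigma> (ap X)"
      unfolding ext_sigma_def by blast
    then obtain W where "W \<in> Y" "W \<subseteq> Z" using assms(3) unfolding refines_def by blast
    then have "ext_set W F p \<in> ext_sigma \<sigma> Y p" "ext_set W F p \<subseteq> T"
      using T ap unfolding ext_sigma_def ext_set_def by auto
    then show "\<exists>W\<in>ext_sigma \<sigma> Y p. W \<subseteq> T" by blast
  qed
qed

lemma par_split:
  assumes "refines X Y" "(Y1, Y2) \<in> par Y"
  shows "({Z\<in>X. \<exists>W\<in>Y1. W \<subseteq> Z}, X - {Z\<in>X. \<exists>W\<in>Y1. W \<subseteq> Z}) \<in> par X"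
    "refines {Z\<in>X. \<exists>W\<in>Y1. W \<subseteq> Z} Y1"
    "refines (X - {Z\<in>X. \<exists>W\<in>Y1. W \<subseteq> Z}) Y2"
proof -
  show "({Z\<in>X. \<exists>W\<in>Y1. W \<subseteq> Z}, X - {Z\<in>X. \<exists>W\<in>Y1. W \<subseteq> Z}) \<in> par X"
    unfolding par_def by auto
  show "refines {Z\<in>X. \<exists>W\<in>Y1. W \<subseteq> Z} Y1" unfolding refines_def by auto
  have r: "\<forall>Z\<in>X. \<exists>W\<in>Y. W \<subseteq> Z" using assms(1) unfolding refines_def .
  have y: "Y = Y1 \<union> Y2" using assms(2) unfolding par_def by auto
  show "refines (X - {Z\<in>X. \<exists>W\<in>Y1. W \<subseteq> Z}) Y2" unfolding refines_def
  proof
    fix Z assume "Z \<in> X - {Z\<in>X. \<exists>W\<in>Y1. W \<subseteq> Z}"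
    then have "Z \<in> X" "\<forall>W\<in>Y1. \<not> W \<subseteq> Z" by auto
    then obtain W where "W \<in> Y" "W \<subseteq> Z" using r by blast
    then show "\<exists>W\<in>Y2. W \<subseteq> Z" using y \<open>\<forall>W\<in>Y1. \<not> W \<subseteq> Z\<close> by blast
  qed
qed

lemma refines_ne: "refines X Y \<Longrightarrow> X \<noteq> {} \<Longrightarrow> Y \<noteq> {}"
  unfolding refines_def by blast

lemma par_sub: "(A, B) \<in> par X \<Longrightarrow> A \<subseteq> X \<and> B \<subseteq> X"
  unfolding par_def by blast

lemma inv:
  "is_hasg X P \<Longrightarrow> is_hasg Y P \<Longrightarrow> refines X Y \<Longrightarrow>
   (sat \<phi> EA X \<longrightarrow> sat \<phi> EA Y) \<and> (sat \<phi> AE Y \<longrightarrow> sat \<phi> AE X)"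
proof (induction \<phi> arbitrary: X Y P)
  case (GLTL \<psi>)
  have r: "\<forall>Z\<in>X. \<exists>W\<in>Y. W \<subseteq> Z" using GLTL.prems(3) unfolding refines_def .
  have 1: "(\<exists>Z\<in>X. \<forall>\<chi>\<in>Z. models_LTL \<chi> \<psi>) \<longrightarrow> (\<exists>Z\<in>Y. \<forall>\<chi>\<in>Z. models_LTL \<chi> \<psi>)"
  proof
    assume "\<exists>Z\<in>X. \<forall>\<chi>\<in>Z. models_LTL \<chi> \<psi>"
    then obtain Z where Z: "Z \<in> X" "\<forall>\<chi>\<in>Z. models_LTL \<chi> \<psi>" by (elim bexE)
    obtain W where "W \<in> Y" "W \<subseteq> Z" using r Z(1) by (elim ballE bexE) auto
    then show "\<exists>Z\<in>Y. \<forall>\<chi>\<in>Z. models_LTL \<chi> \<psi>" using Z(2) by (intro bexI[of _ W]) auto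
  qed
  have 2: "(\<forall>Z\<in>Y. \<exists>\<chi>\<in>Z. models_LTL \<chi> \<psi>) \<longrightarrow> (\<forall>Z\<in>X. \<exists>\<chi>\<in>Z. models_LTL \<chi> \<psi>)"
  proof (intro impI ballI)
    fix Z assume a: "\<forall>Z\<in>Y. \<exists>\<chi>\<in>Z. models_LTL \<chi> \<psi>" and Z: "Z \<in> X"
    obtain W where "W \<in> Y" "W \<subseteq> Z" using r Z by (elim ballE bexE) auto
    then have "\<exists>\<chi>\<in>W. models_LTL \<chi> \<psi>" using a by (rule_tac bspec) 
    then obtain \<chi> where "\<chi> \<in> W" "models_LTL \<chi> \<psi>" by (elim bexE)
    then show "\<exists>\<chi>\<in>Z. models_LTL \<chi> \<psi>" using \<open>W \<subseteq> Z\<close> by auto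
  qed
  show ?case unfolding sat.simps flag.case using 1 2 by blast
next
  case (GNeg \<phi>)
  have "(sat \<phi> EA X \<longrightarrow> sat \<phi> EA Y) \<and> (sat \<phi> AE Y \<longrightarrow> sat \<phi> AE X)"
    by (rule GNeg.IH[OF GNeg.prems])
  then show ?case unfolding sat.simps flip.simps by blast
next
  case (GConj \<phi>1 \<phi>2)
  have ea: "(\<forall>(Y1, Y2)\<in>par Y. (Y1 \<noteq> {} \<and> sat \<phi>1 EA Y1) \<or> (Y2 \<noteq> {} \<and> sat \<phi>2 EA Y2))"
    if h: "is_hasg X P" "is_hasg Y P" "refines X Y"
      "\<forall>(X1, X2)\<in>par X. (X1 \<noteq> {} \<and> sat \<phi>1 EA X1) \<or> (X2 \<noteq> {} \<and> sat \<phi>2 EA X2)"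
    for X Y :: "'a asg set set" and P
  proof (clarify)
    fix Y1 Y2 assume yp: "(Y1, Y2) \<in> par Y" and n1: "\<not> (Y2 \<noteq> {} \<and> sat \<phi>2 EA Y2)"
    define X1 where "X1 = {Z\<in>X. \<exists>W\<in>Y1. W \<subseteq> Z}"
    note s = par_split[OF h(3) yp, folded X1_def]
    have ys: "Y1 \<subseteq> Y" "Y2 \<subseteq> Y" using par_sub[OF yp] by auto
    have xs: "X1 \<subseteq> X" "X - X1 \<subseteq> X" unfolding X1_def by auto
    from h(4) s(1) consider "X1 \<noteq> {} \<and> sat \<phi>1 EA X1" | "X - X1 \<noteq> {} \<and> sat \<phi>2 EA (X - X1)"
      by blast
    then show "Y1 \<noteq> {} \<and> sat \<phi>1 EA Y1"
    proof cases
      case 1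
      then have "Y1 \<noteq> {}" using refines_ne s(2) by blast
      then show ?thesis using 1 GConj.IH(1)[OF hasg_subset[OF h(1) xs(1)] hasg_subset[OF h(2) ys(1)] s(2)]
        by blast
    next
      case 2
      then have "Y2 \<noteq> {}" using refines_ne s(3) by blast
      then have False using 2 n1 GConj.IH(2)[OF hasg_subset[OF h(1) xs(2)] hasg_subset[OF h(2) ys(2)] s(3)]
        by blast
      then show ?thesis ..
    qed
  qed
  show ?case
  proof (intro conjI impI)
    assume "sat (GConj \<phi>1 \<phi>2) EA X"
    then show "sat (GConj \<phi>1 \<phi>2) EA Y" using ea[OF GConj.prems] by simp
  next
    assume "sat (GConj \<phi>1 \<phi>2) AE Y"
    then show "sat (GConj \<phi>1 \<phi>2) AE X"
      using ea[OF dual_hasg[OF GConj.prems(2)] dual_hasg[OF GConj.prems(1)] dual_antitone[OF GConj.prems(3)]]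
      by simp
  qed
next
  case (GDisj \<phi>1 \<phi>2)
  have ae: "(\<exists>(X1, X2)\<in>par X. (X1 \<noteq> {} \<longrightarrow> sat \<phi>1 AE X1) \<and> (X2 \<noteq> {} \<longrightarrow> sat \<phi>2 AE X2))"
    if h: "is_hasg X P" "is_hasg Y P" "refines X Y"
      "\<exists>(Y1, Y2)\<in>par Y. (Y1 \<noteq> {} \<longrightarrow> sat \<phi>1 AE Y1) \<and> (Y2 \<noteq> {} \<longrightarrow> sat \<phi>2 AE Y2)"
    for X Y :: "'a asg set set" and P
  proof -
    from h(4) obtain Y1 Y2 where yp: "(Y1, Y2) \<in> par Y"
      and a1: "Y1 \<noteq> {} \<longrightarrow> sat \<phi>1 AE Y1" and a2: "Y2 \<noteq> {} \<longrightarrow> sat \<phi>2 AE Y2" by blast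
    define X1 where "X1 = {Z\<in>X. \<exists>W\<in>Y1. W \<subseteq> Z}"
    note s = par_split[OF h(3) yp, folded X1_def]
    have ys: "Y1 \<subseteq> Y" "Y2 \<subseteq> Y" using par_sub[OF yp] by auto
    have xs: "X1 \<subseteq> X" "X - X1 \<subseteq> X" unfolding X1_def by auto
    have "X1 \<noteq> {} \<longrightarrow> sat \<phi>1 AE X1"
    proof
      assume "X1 \<noteq> {}"
      then have "Y1 \<noteq> {}" using refines_ne s(2) by blast
      then show "sat \<phi>1 AE X1" using a1 GDisj.IH(1)[OF hasg_subset[OF h(1) xs(1)] hasg_subset[OF h(2) ys(1)] s(2)]
        \<open>X1 \<noteq> {}\<close> by blast
    qed
    moreover have "X - X1 \<noteq> {} \<longrightarrow> sat \<phi>2 AE (X - X1)"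
    proof
      assume "X - X1 \<noteq> {}"
      then have "Y2 \<noteq> {}" using refines_ne s(3) by blast
      then show "sat \<phi>2 AE (X - X1)" using a2 GDisj.IH(2)[OF hasg_subset[OF h(1) xs(2)] hasg_subset[OF h(2) ys(2)] s(3)]
        \<open>X - X1 \<noteq> {}\<close> by blast
    qed
    ultimately show ?thesis using s(1) by blast
  qed
  show ?case
  proof (intro conjI impI)
    assume "sat (GDisj \<phi>1 \<phi>2) AE Y"
    then show "sat (GDisj \<phi>1 \<phi>2) AE X" using ae[OF GDisj.prems] by simp
  next
    assume "sat (GDisj \<phi>1 \<phi>2) EA X"
    then show "sat (GDisj \<phi>1 \<phi>2) EA Y"
      using ae[OF dual_hasg[OF GDisj.prems(2)] dual_hasg[OF GDisj.prems(1)] dual_antitone[OF GDisj.prems(3)]]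
      by simp
  qed
next
  case (GEx p \<sigma> \<phi>)
  have ea: "sat \<phi> EA (ext_sigma \<sigma> X p) \<Longrightarrow> sat \<phi> EA (ext_sigma \<sigma> Y p)"
    if h: "is_hasg X P" "is_hasg Y P" "refines X Y" for X Y :: "'a asg set set" and P
    using GEx.IH[OF ext_hasg[OF h(1)] ext_hasg[OF h(2)] ext_mono[OF h]] by blast
  show ?case
    using ea[OF GEx.prems] ea[OF dual_hasg[OF GEx.prems(2)] dual_hasg[OF GEx.prems(1)] dual_antitone[OF GEx.prems(3)]]
    by simp
next
  case (GAll p \<sigma> \<phi>)
  have ae: "sat \<phi> AE (ext_sigma \<sigma> Y p) \<Longrightarrow> sat \<phi> AE (ext_sigma \<sigma> X p)"
    if h: "is_hasg X P" "is_hasg Y P" "refines X Y" for X Y :: "'a asg set set" and P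
    using GAll.IH[OF ext_hasg[OF h(1)] ext_hasg[OF h(2)] ext_mono[OF h]] by blast
  show ?case
    using ae[OF GAll.prems] ae[OF dual_hasg[OF GAll.prems(2)] dual_hasg[OF GAll.prems(1)] dual_antitone[OF GAll.prems(3)]]
    by simp
qed

lemma dd_inv: assumes "is_hasg Z P" shows "sat \<phi> \<alpha> (dual (dual Z)) \<longleftrightarrow> sat \<phi> \<alpha> Z"
proof -
  have h: "is_hasg (dual (dual Z)) P" using assms dual_hasg by blast
  show ?thesis using inv[OF assms h refines_dd1] inv[OF h assms refines_dd2]
    by (cases \<alpha>) blast+
qed

lemma dual_AE_ltl: "(\<forall>T\<in>dual Z. \<exists>\<chi>\<in>T. Q \<chi>) \<longleftrightarrow> (\<exists>X\<in>Z. \<forall>\<chi>\<in>X. Q \<chi>)"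
proof
  assume a: "\<forall>T\<in>dual Z. \<exists>\<chi>\<in>T. Q \<chi>"
  show "\<exists>X\<in>Z. \<forall>\<chi>\<in>X. Q \<chi>"
  proof (rule ccontr)
    assume "\<not> ?thesis"
    then have "\<forall>X\<in>Z. \<exists>\<chi>. \<chi> \<in> X \<and> \<not> Q \<chi>" by blast
    define c where "c X = (SOME \<chi>. \<chi> \<in> X \<and> \<not> Q \<chi>)" for X
    have c: "\<forall>X\<in>Z. c X \<in> X \<and> \<not> Q (c X)"
      using some_ch[OF \<open>\<forall>X\<in>Z. \<exists>\<chi>. \<chi> \<in> X \<and> \<not> Q \<chi>\<close>] unfolding c_def .
    have "c ` Z \<in> dual Z" by (rule dual_I) (use c in blast)
    with a have "\<exists>\<chi>\<in>c ` Z. Q \<chi>" by (rule bspec)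
    then obtain X where "X \<in> Z" "Q (c X)" by (elim bexE imageE) simp
    then show False using c by blast
  qed
next
  assume "\<exists>X\<in>Z. \<forall>\<chi>\<in>X. Q \<chi>"
  then obtain X where X: "X \<in> Z" "\<forall>\<chi>\<in>X. Q \<chi>" by (elim bexE)
  show "\<forall>T\<in>dual Z. \<exists>\<chi>\<in>T. Q \<chi>"
  proof
    fix T assume "T \<in> dual Z"
    then obtain d where "T = d ` Z" "\<forall>W\<in>Z. d W \<in> W" by (rule dual_E) blast
    then have "d X \<in> T" "Q (d X)" using X by auto
    then show "\<exists>\<chi>\<in>T. Q \<chi>" by blast
  qed
qed

lemma dual_EA_ltl: "(\<exists>T\<in>dual Z. \<forall>\<chi>\<in>T. Q \<chi>) \<longleftrightarrow> (\<forall>X\<in>Z. \<exists>\<chi>\<in>X. Q \<chi>)"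
proof
  assume "\<exists>T\<in>dual Z. \<forall>\<chi>\<in>T. Q \<chi>"
  then obtain T where T: "T \<in> dual Z" "\<forall>\<chi>\<in>T. Q \<chi>" by (elim bexE)
  from T(1) obtain d where d: "T = d ` Z" "\<forall>W\<in>Z. d W \<in> W" by (rule dual_E) blast
  show "\<forall>X\<in>Z. \<exists>\<chi>\<in>X. Q \<chi>"
  proof
    fix X assume "X \<in> Z"
    then have "d X \<in> X" "Q (d X)" using d T(2) by auto
    then show "\<exists>\<chi>\<in>X. Q \<chi>" by blast
  qed
next
  assume a: "\<forall>X\<in>Z. \<exists>\<chi>\<in>X. Q \<chi>"
  then have a': "\<forall>X\<in>Z. \<exists>\<chi>. \<chi> \<in> X \<and> Q \<chi>" by blast
  define c where "c X = (SOME \<chi>. \<chi> \<in> X \<and> Q \<chi>)" for X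
  have c: "\<forall>X\<in>Z. c X \<in> X \<and> Q (c X)"
    using some_ch[OF a'] unfolding c_def .
  have "c ` Z \<in> dual Z" by (rule dual_I) (use c in blast)
  moreover have "\<forall>\<chi>\<in>c ` Z. Q \<chi>" using c by blast
  ultimately show "\<exists>T\<in>dual Z. \<forall>\<chi>\<in>T. Q \<chi>" by blast
qed

lemma flip_flip[simp]: "flip (flip \<alpha>) = \<alpha>"
  by (cases \<alpha>) auto

lemma dual_L: "is_hasg Z P \<Longrightarrow> sat \<phi> (flip \<alpha>) (dual Z) \<longleftrightarrow> sat \<phi> \<alpha> Z"
proof (induction \<phi> arbitrary: \<alpha> Z P)
  case (GLTL \<psi>)
  then show ?case by (cases \<alpha>) (simp_all add: dual_AE_ltl dual_EA_ltl)
next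
  case (GNeg \<phi>)
  then show ?case using GNeg.IH[of Z P "flip \<alpha>"] by simp
next
  case (GConj \<phi>1 \<phi>2)
  then show ?case using dd_inv[OF GConj.prems, of "GConj \<phi>1 \<phi>2" EA]
    by (cases \<alpha>) simp_all
next
  case (GDisj \<phi>1 \<phi>2)
  then show ?case using dd_inv[OF GDisj.prems, of "GDisj \<phi>1 \<phi>2" AE]
    by (cases \<alpha>) simp_all
next
  case (GEx p \<sigma> \<phi>)
  then show ?case using dd_inv[OF GEx.prems, of "GEx p \<sigma> \<phi>" EA]
    by (cases \<alpha>) simp_all
next
  case (GAll p \<sigma> \<phi>)
  then show ?case using dd_inv[OF GAll.prems, of "GAll p \<sigma> \<phi>" AE]
    by (cases \<alpha>) simp_all
qed

theorem mainTheorem9: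
  fixes \<phi> :: "'a gfg" and \<X> :: "'a asg set set" and \<alpha> :: flag
  assumes "\<X> \<in> HAsg_sup (free \<phi>)"
  shows "(sat \<phi> (flip \<alpha>) (dual \<X>) \<longleftrightarrow> sat \<phi> \<alpha> (dual (dual \<X>)))
       \<and> (sat \<phi> \<alpha> (dual (dual \<X>)) \<longleftrightarrow> sat \<phi> \<alpha> \<X>)"
proof -
  obtain Q where h: "is_hasg \<X> Q" using assms unfolding HAsg_sup_def by blast
  show ?thesis using dual_L[OF h] dd_inv[OF h] by blast
qed

end
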